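(* Let $I$ be a closed interval of positive length, and let $\alpha:I\to S^{k-1}\subseteq\mathbb{R}^k$, $\alpha(s)=(\alpha_1(s),\dots,\alpha_k(s))$, be a continuous, nonconstant path. Define $D_\alpha:I\to\mathbb{Z}$ by $D_\alpha(s)=\dim_{\mathbb{Q}}\{\beta\in\mathbb{Q}^k:\beta\cdot\alpha(s)=0\}$. Then $D_\alpha$ is not constant. *)

theory Defs
  imports "HOL-Analysis.Analysis"
begin

definition rat_orth_dim :: "('k::finite \<Rightarrow> real) \<Rightarrow> int" where
  "rat_orth_dim x = int (vec.dim {\<beta> :: rat^'k. (\<Sum>i\<in>UNIV. of_rat (\<beta> $ i) * x i) = 0})"

definition D_alpha :: "(real \<Rightarrow> real^'k::finite) \<Rightarrow> real \<Rightarrow> int" where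
  "D_alpha \<alpha> s = rat_orth_dim (\<lambda>i. \<alpha> s $ i)"

end

theory Submission
  imports Defs
begin

lemma rat_approx_sep:
  fixes x y :: "real^'k::finite"
  assumes nx: "norm x = 1" and ny: "norm y = 1" and xy: "x \<noteq> y"
  shows "\<exists>\<beta>::rat^'k. (\<Sum>i\<in>UNIV. of_rat (\<beta>$i) * x$i) > 0 \<and> (\<Sum>i\<in>UNIV. of_rat (\<beta>$i) * y$i) < 0"
proof -
  define v where "v = x - y"
  define p where "p = inner x y"
  have xx: "inner x x = 1" using nx by (simp add: dot_square_norm)
  have yy: "inner y y = 1" using ny by (simp add: dot_square_norm)
  have vx: "inner v x = 1 - p" unfolding v_def p_def using xx by (simp add: inner_diff_left inner_commute[of y x])
  have vy: "inner v y = p - 1" unfolding v_def p_def using yy by (simp add: inner_diff_left)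
  have "inner v v > 0" using xy unfolding v_def by simp
  moreover have "inner v v = inner v x - inner v y" unfolding v_def by (simp add: inner_diff_right)
  ultimately have dpos: "1 - p > 0" using vx vy by simp
  define d where "d = 1 - p"
  define e where "e = d / (2 * real CARD('k))"
  have epos: "e > 0" unfolding e_def d_def using dpos by simp
  have "\<forall>i. \<exists>q::rat. v$i - e < of_rat q \<and> of_rat q < v$i + e"
  proof
    fix i show "\<exists>q::rat. v$i - e < of_rat q \<and> of_rat q < v$i + e"
      by (rule of_rat_dense) (use epos in linarith)
  qed
  then obtain q where q: "\<And>i. v$i - e < of_rat (q i) \<and> of_rat (q i) < v$i + e" by metis
  define \<beta> where "\<beta> = (\<chi> i. q i)"
  have key: "\<bar>(\<Sum>i\<in>UNIV. of_rat (\<beta>$i) * z$i) - inner v z\<bar> \<le> d/2" if nz: "norm z = 1" for z :: "real^'k"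
  proof -
    have "(\<Sum>i\<in>UNIV. of_rat (\<beta>$i) * z$i) - inner v z = (\<Sum>i\<in>UNIV. (of_rat (q i) - v$i) * z$i)"
      by (simp add: \<beta>_def inner_vec_def sum_subtractf left_diff_distrib)
    also have "\<bar>\<dots>\<bar> \<le> (\<Sum>i\<in>UNIV. \<bar>(of_rat (q i) - v$i) * z$i\<bar>)" by (rule sum_abs)
    also have "\<dots> \<le> (\<Sum>i\<in>(UNIV::'k set). e)"
    proof (rule sum_mono)
      fix i
      have "\<bar>z$i\<bar> \<le> 1" using component_le_norm_cart[of z i] nz by simp
      moreover have "\<bar>of_rat (q i) - v$i\<bar> \<le> e" using q[of i] by auto
      ultimately have "\<bar>of_rat (q i) - v$i\<bar> * \<bar>z$i\<bar> \<le> e * 1"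
        by (intro mult_mono) auto
      then show "\<bar>(of_rat (q i) - v$i) * z$i\<bar> \<le> e"
        by (simp add: abs_mult)
    qed
    also have "\<dots> = d/2" unfolding e_def by simp
    finally show ?thesis .
  qed
  have t1: "0 < X" if "A = d" "0 < d" "\<bar>X - A\<bar> \<le> d/2" for X A :: real
    using that unfolding abs_le_iff by linarith
  have t2: "X < 0" if "A = - d" "0 < d" "\<bar>X - A\<bar> \<le> d/2" for X A :: real
    using that unfolding abs_le_iff by linarith
  have "(\<Sum>i\<in>UNIV. of_rat (\<beta>$i) * x$i) > 0"
    by (rule t1[OF _ _ key[OF nx]]) (use vx dpos d_def in auto)
  moreover have "(\<Sum>i\<in>UNIV. of_rat (\<beta>$i) * y$i) < 0"
    by (rule t2[OF _ _ key[OF ny]]) (use vy dpos d_def in auto)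
  ultimately show ?thesis by blast
qed

theorem mainTheorem7:
  fixes a b :: real and \<alpha> :: "real \<Rightarrow> real^'k::finite"
  assumes "a < b"
    and "continuous_on {a..b} \<alpha>"
    and "\<alpha> ` {a..b} \<subseteq> sphere 0 1"
    and "\<exists>s\<in>{a..b}. \<exists>t\<in>{a..b}. \<alpha> s \<noteq> \<alpha> t"
  shows "\<not> (\<exists>c. \<forall>s\<in>{a..b}. D_alpha \<alpha> s = c)"
proof
  assume "\<exists>c. \<forall>s\<in>{a..b}. D_alpha \<alpha> s = c"
  then obtain c where c: "\<And>s. s \<in> {a..b} \<Longrightarrow> D_alpha \<alpha> s = c" by blast
  define ev where "ev \<beta> u = (\<Sum>i\<in>UNIV. of_rat (\<beta> $ i) * (\<alpha> u $ i))" for \<beta> :: "rat^'k" and u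
  define V where "V u = {\<beta>. ev \<beta> u = 0}" for u
  have dimV: "vec.dim (V u) = vec.dim (V a)" if "u \<in> {a..b}" for u
  proof -
    have "D_alpha \<alpha> u = D_alpha \<alpha> a" using c that \<open>a < b\<close> by simp
    then show ?thesis unfolding D_alpha_def rat_orth_dim_def V_def ev_def by simp
  qed
  have ev_add: "ev (x + y) u = ev x u + ev y u" for x y u
    unfolding ev_def by (simp add: of_rat_add distrib_right sum.distrib)
  have ev_scale: "ev (r *s x) u = of_rat r * ev x u" for r x u
    unfolding ev_def by (simp add: of_rat_mult mult.assoc sum_distrib_left)
  have ev_zero: "ev 0 u = 0" for u unfolding ev_def by simp
  have subV: "vec.subspace (V u)" for u
    unfolding vec.subspace_def V_def using ev_add ev_scale ev_zero by simp
  have eqV: "V w = V u" if "w \<in> {a..b}" "u \<in> {a..b}" "V w \<subseteq> V u" for u w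
  proof -
    have "vec.dim (V u) \<le> vec.dim (V w)" using dimV[OF that(1)] dimV[OF that(2)] by linarith
    then show ?thesis using vec.subspace_dim_equal[OF subV subV that(3)] by blast
  qed
  have contev: "continuous_on {a..b} (ev \<beta>)" for \<beta>
    unfolding ev_def using assms(2) by (intro continuous_intros) auto
  obtain s t where st: "s \<in> {a..b}" "t \<in> {a..b}" "\<alpha> s \<noteq> \<alpha> t" using assms(4) by blast
  define F where "F W = {u \<in> {a..b}. W \<subseteq> V u}" for W
  define U where "U = (\<lambda>w. F (V w)) ` {a..b}"
  have clF: "closed (F W)" for W
  proof -
    have "F W = {a..b} \<inter> (\<Inter>\<beta>\<in>W. {u \<in> {a..b}. ev \<beta> u = 0})" unfolding F_def V_def by auto
    moreover have "closed {u \<in> {a..b}. ev \<beta> u = 0}" for \<beta>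
      using continuous_closed_preimage_constant[OF contev closed_atLeastAtMost] .
    ultimately show ?thesis by (auto intro!: closed_Int closed_INT)
  qed
  have cntV: "countable (V ` {a..b})"
  proof -
    have "V ` {a..b} \<subseteq> vec.span ` {B. finite B}"
    proof
      fix W assume "W \<in> V ` {a..b}"
      then obtain u where W: "W = V u" by auto
      obtain B where B: "B \<subseteq> V u" "vec.independent B" "V u \<subseteq> vec.span B"
        and "card B = vec.dim (V u)" by (rule vec.basis_exists)
      have fB: "finite B" using vec.finiteI_independent B(2) .
      have "vec.span B \<subseteq> V u" using vec.span_minimal[OF B(1) subV] .
      then have "W = vec.span B" using B(3) W by blast
      then show "W \<in> vec.span ` {B. finite B}" using fB by blast
    qed
    moreover have "countable (vec.span ` {B::(rat^'k) set. finite B})"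
      using countable_Collect_finite by blast
    ultimately show ?thesis by (rule countable_subset)
  qed
  have cU: "countable U" unfolding U_def
    using countable_image[OF cntV, of F] by (simp add: image_image)
  have pw: "pairwise disjnt U"
    unfolding pairwise_def disjnt_def
  proof (intro ballI impI)
    fix X Y assume XY: "X \<in> U" "Y \<in> U" "X \<noteq> Y"
    then obtain w1 w2 where w: "w1 \<in> {a..b}" "w2 \<in> {a..b}" "X = F (V w1)" "Y = F (V w2)"
      unfolding U_def by blast
    show "X \<inter> Y = {}"
    proof (rule ccontr)
      assume "X \<inter> Y \<noteq> {}"
      then obtain u where u: "u \<in> F (V w1)" "u \<in> F (V w2)" using w by blast
      then have "u \<in> {a..b}" "V w1 \<subseteq> V u" "V w2 \<subseteq> V u" unfolding F_def by auto
      then have "V w1 = V w2" using eqV w by metis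
      then show False using XY w by simp
    qed
  qed
  have clo: "closed C \<and> C \<noteq> {}" if "C \<in> U" for C
    using that clF unfolding U_def F_def by auto
  have un: "\<Union>U = {a..b}" unfolding U_def F_def by auto
  have "U = {{a..b}}"
    using real_Sierpinski_lemma[of a b U] \<open>a < b\<close> cU pw clo un by simp
  then have Fall: "F (V w) = {a..b}" if "w \<in> {a..b}" for w
    using that unfolding U_def by blast
  have ns: "norm (\<alpha> s) = 1" and nt: "norm (\<alpha> t) = 1" using assms(3) st by (auto simp: subset_iff)
  obtain \<beta> :: "rat^'k" where \<beta>: "ev \<beta> s > 0" "ev \<beta> t < 0"
    using rat_approx_sep[OF ns nt st(3)] unfolding ev_def by blast
  obtain u where u: "u \<in> {a..b}" "ev \<beta> u = 0"
  proof (cases "s \<le> t")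
    case True
    have "continuous_on {s..t} (ev \<beta>)" using contev by (rule continuous_on_subset) (use st in auto)
    then obtain u where "s \<le> u" "u \<le> t" "ev \<beta> u = 0"
      using IVT2'[of "ev \<beta>" t 0 s] \<beta> True by auto
    then show ?thesis using that[of u] st by auto
  next
    case False
    have "continuous_on {t..s} (ev \<beta>)" using contev by (rule continuous_on_subset) (use st in auto)
    then obtain u where "t \<le> u" "u \<le> s" "ev \<beta> u = 0"
      using IVT'[of "ev \<beta>" t 0 s] \<beta> False by auto
    then show ?thesis using that[of u] st by auto
  qed
  have "s \<in> F (V u)" using Fall[OF u(1)] st by simp
  then have "V u \<subseteq> V s" unfolding F_def by simp
  moreover have "\<beta> \<in> V u" using u unfolding V_def by simp
  ultimately have "ev \<beta> s = 0" unfolding V_def by blast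
  then show False using \<beta> by simp
qed

end
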